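(* Let $q \geq 8$ be a prime power and let $\mathcal{X}$ be a plane curve of degree $q-1$ defined over $\mathbb{F}_q$ without $\mathbb{F}_q$-linear components with $\mathrm{N}_q(\mathcal{X}) = (q-1)^2$. If $Q \in Z(\mathcal{X})$ is a point with $r = \psi_{q-1}(Q) \geq 4$, then $r = q-1$. In particular, $a_0 = 3$.
   Context: $\mathcal{X}(\mathbb{F}_q)=\mathcal{X}\cap\mathbb{P}^2(\mathbb{F}_q)$, $\mathrm{N}_q(\mathcal{X})=\#\mathcal{X}(\mathbb{F}_q)$; "without $\mathbb{F}_q$-linear components" means no line defined over $\mathbb{F}_q$ is a component. $Z(\mathcal{X}) := \mathbb{P}^2(\mathbb{F}_q)\setminus\mathcal{X}(\mathbb{F}_q)$. For a point $P$, $\psi_i(P)$ is the number of $\mathbb{F}_q$-lines $l$ through $P$ with $\#(l\cap\mathcal{X}(\mathbb{F}_q))=i$. $a_0$ is the number of $\mathbb{F}_q$-lines containing no point of $\mathcal{X}(\mathbb{F}_q)$. *)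

theory Defs
  imports "HOL-Computational_Algebra.Polynomial" "HOL-Library.Cardinality"
begin

text \<open>Polynomials in three variables X, Y, Z over a field 'a are represented as
nested univariate polynomials: innermost variable X, middle Y, outermost Z.\<close>

type_synonym 'a poly3 = "'a poly poly poly"

definition varX :: "'a::comm_ring_1 poly3" where
  "varX = [:[:[:0, 1:]:]:]"

definition varY :: "'a::comm_ring_1 poly3" where
  "varY = [:[:0, 1:]:]"

definition varZ :: "'a::comm_ring_1 poly3" where
  "varZ = [:0, 1:]"

definition const3 :: "'a::comm_ring_1 \<Rightarrow> 'a poly3" where
  "const3 c = [:[:[:c:]:]:]"

definition eval3 :: "'a::comm_ring_1 poly3 \<Rightarrow> 'a \<Rightarrow> 'a \<Rightarrow> 'a \<Rightarrow> 'a" where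
  "eval3 F x y z = poly (poly (poly F [:[:z:]:]) [:y:]) x"

definition coeff3 :: "'a::zero poly3 \<Rightarrow> nat \<Rightarrow> nat \<Rightarrow> nat \<Rightarrow> 'a" where
  "coeff3 F i j k = coeff (coeff (coeff F k) j) i"

definition homogeneous3 :: "'a::zero poly3 \<Rightarrow> nat \<Rightarrow> bool" where
  "homogeneous3 F d \<longleftrightarrow> (\<forall>i j k. coeff3 F i j k \<noteq> 0 \<longrightarrow> i + j + k = d)"

definition lin_form :: "'a::comm_ring_1 \<Rightarrow> 'a \<Rightarrow> 'a \<Rightarrow> 'a poly3" where
  "lin_form a b c = const3 a * varX + const3 b * varY + const3 c * varZ"

definition no_linear_components :: "'a::field poly3 \<Rightarrow> bool" where
  "no_linear_components F \<longleftrightarrow>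
     (\<forall>a b c. (a, b, c) \<noteq> (0, 0, 0) \<longrightarrow> \<not> lin_form a b c dvd F)"

definition proj_pt :: "'a::field \<times> 'a \<times> 'a \<Rightarrow> ('a \<times> 'a \<times> 'a) set" where
  "proj_pt v = (case v of (x, y, z) \<Rightarrow> {(l * x, l * y, l * z) | l. l \<noteq> 0})"

definition P2 :: "('a::field \<times> 'a \<times> 'a) set set" where
  "P2 = {proj_pt v | v. v \<noteq> (0, 0, 0)}"

definition proj_line :: "'a::field \<Rightarrow> 'a \<Rightarrow> 'a \<Rightarrow> ('a \<times> 'a \<times> 'a) set set" where
  "proj_line a b c = {P \<in> P2. \<forall>(x, y, z) \<in> P. a * x + b * y + c * z = 0}"

definition lines :: "('a::field \<times> 'a \<times> 'a) set set set" where
  "lines = {proj_line a b c | a b c. (a, b, c) \<noteq> (0, 0, 0)}"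

definition curve_pts :: "'a::field poly3 \<Rightarrow> ('a \<times> 'a \<times> 'a) set set" where
  "curve_pts F = {P \<in> P2. \<forall>(x, y, z) \<in> P. eval3 F x y z = 0}"

definition Zset :: "'a::field poly3 \<Rightarrow> ('a \<times> 'a \<times> 'a) set set" where
  "Zset F = P2 - curve_pts F"

definition psi :: "'a::field poly3 \<Rightarrow> nat \<Rightarrow> ('a \<times> 'a \<times> 'a) set \<Rightarrow> nat" where
  "psi F i P = card {l \<in> lines. P \<in> l \<and> card (l \<inter> curve_pts F) = i}"

definition a0 :: "'a::field poly3 \<Rightarrow> nat" where
  "a0 F = card {l \<in> lines. l \<inter> curve_pts F = {}}"

end

theory Submission
  imports Defs
begin

lemma ff_char: "of_nat CARD('a::{finite,field}) = (0::'a)"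
proof -
  have "(\<Sum>x\<in>(UNIV::'a set). x) = (\<Sum>x\<in>UNIV. x + 1)"
    by (rule sum.reindex_bij_witness[where i="\<lambda>x. x + 1" and j="\<lambda>x. x - 1"]) auto
  also have "\<dots> = (\<Sum>x\<in>(UNIV::'a set). x) + of_nat CARD('a)"
    by (simp add: sum.distrib)
  finally show ?thesis by simp
qed

lemma ff_pow: fixes x :: "'a::{finite,field}" assumes "x \<noteq> 0"
  shows "x ^ (CARD('a) - 1) = 1"
proof -
  let ?S = "UNIV - {0::'a}"
  have "(\<Prod>y\<in>?S. y) = (\<Prod>y\<in>?S. x * y)"
    by (rule prod.reindex_bij_witness[where i="\<lambda>y. x * y" and j="\<lambda>y. y / x"]) (use assms in auto)
  also have "\<dots> = x ^ card ?S * (\<Prod>y\<in>?S. y)"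
    by (simp add: prod.distrib)
  finally have "x ^ card ?S = 1"
    by (subgoal_tac "(\<Prod>y\<in>?S. y) \<noteq> 0") auto
  moreover have "card ?S = CARD('a) - 1" by (simp add: card_Diff_subset)
  ultimately show ?thesis by simp
qed

lemma eval3_add[simp]: "eval3 (A + B) x y z = eval3 A x y z + eval3 B x y z"
  by (simp add: eval3_def)
lemma eval3_mult[simp]: "eval3 (A * B) x y z = eval3 A x y z * eval3 B x y z"
  by (simp add: eval3_def)
lemma eval3_power[simp]: "eval3 (A ^ n) x y z = eval3 A x y z ^ n"
  by (simp add: eval3_def)
lemma eval3_sum[simp]: "eval3 (sum f S) x y z = (\<Sum>i\<in>S. eval3 (f i) x y z)"
  by (simp add: eval3_def poly_sum)
lemma eval3_const3[simp]: "eval3 (const3 c) x y z = c"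
  by (simp add: eval3_def const3_def)
lemma eval3_lin_form[simp]: "eval3 (lin_form a b c) x y z = a * x + b * y + c * z"
  by (simp add: eval3_def lin_form_def varX_def varY_def varZ_def const3_def algebra_simps)

lemma coeff3_add[simp]: "coeff3 (A + B) i j k = coeff3 A i j k + coeff3 B i j k"
  by (simp add: coeff3_def)
lemma coeff3_sum: "coeff3 (sum f S) i j k = (\<Sum>x\<in>S. coeff3 (f x) i j k)"
  by (simp add: coeff3_def coeff_sum)

lemma coeff3_mult: "coeff3 (A * B) i j k =
  (\<Sum>k1\<le>k. \<Sum>j1\<le>j. \<Sum>i1\<le>i. coeff3 A i1 j1 k1 * coeff3 B (i - i1) (j - j1) (k - k1))"
  by (simp add: coeff3_def coeff_mult coeff_sum)

lemma homog_mult: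
  assumes "homogeneous3 A d" "homogeneous3 B e"
  shows "homogeneous3 (A * B) (d + e)"
  unfolding homogeneous3_def
proof (intro allI impI)
  fix i j k assume "coeff3 (A * B) i j k \<noteq> 0"
  then obtain k1 j1 i1 where b: "k1 \<le> k" "j1 \<le> j" "i1 \<le> i"
    and nz: "coeff3 A i1 j1 k1 * coeff3 B (i - i1) (j - j1) (k - k1) \<noteq> 0"
    unfolding coeff3_mult by (meson atMost_iff sum.not_neutral_contains_not_neutral)
  from nz have "coeff3 A i1 j1 k1 \<noteq> 0" "coeff3 B (i - i1) (j - j1) (k - k1) \<noteq> 0" by auto
  hence "i1 + j1 + k1 = d" "(i - i1) + (j - j1) + (k - k1) = e"
    using assms unfolding homogeneous3_def by blast+
  with b show "i + j + k = d + e" by linarith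
qed

lemma homog_add:
  assumes "homogeneous3 A d" "homogeneous3 B d"
  shows "homogeneous3 (A + B) d"
  using assms unfolding homogeneous3_def by (metis add.right_neutral coeff3_add)

lemma homog_sum:
  assumes "\<And>x. x \<in> S \<Longrightarrow> homogeneous3 (f x) d"
  shows "homogeneous3 (sum f S) d"
  using assms unfolding homogeneous3_def coeff3_sum
  by (meson sum.not_neutral_contains_not_neutral)

lemma homog_zero[simp]: "homogeneous3 0 d"
  by (simp add: homogeneous3_def coeff3_def)

lemma coeff3_const3: "coeff3 (const3 c) i j k = (if i = 0 \<and> j = 0 \<and> k = 0 then c else 0)"
  by (simp add: coeff3_def const3_def coeff_pCons split: nat.splits)

lemma homog_const3: "homogeneous3 (const3 c) 0"
  by (simp add: homogeneous3_def coeff3_const3)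

lemma homog_one: "homogeneous3 (1::'a::comm_ring_1 poly3) 0"
  using homog_const3[of 1] by (simp add: const3_def one_pCons one_poly_def)

lemma homog_power:
  fixes A :: "'a::comm_ring_1 poly3"
  assumes "homogeneous3 A d" shows "homogeneous3 (A ^ n) (n * d)"
  by (induction n) (simp_all add: homog_one homog_mult assms)

lemma homog_varX: "homogeneous3 varX 1"
  by (simp add: homogeneous3_def coeff3_def varX_def coeff_pCons split: nat.splits)
lemma homog_varY: "homogeneous3 varY 1"
  by (simp add: homogeneous3_def coeff3_def varY_def coeff_pCons split: nat.splits)
lemma homog_varZ: "homogeneous3 varZ 1"
  by (simp add: homogeneous3_def coeff3_def varZ_def coeff_pCons split: nat.splits)

lemma homog_lin_form: "homogeneous3 (lin_form a b c) 1"
proof -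
  have h: "homogeneous3 (const3 t * V) 1" if "homogeneous3 V 1" for t :: 'a and V
    using homog_mult[OF homog_const3 that] by simp
  show ?thesis unfolding lin_form_def
    by (intro homog_add h homog_varX homog_varY homog_varZ)
qed

lemma poly_sum_bound:
  fixes p :: "'a::comm_ring_1 poly"
  assumes "degree p \<le> n" shows "poly p x = (\<Sum>i\<le>n. coeff p i * x ^ i)"
proof -
  have "poly p x = poly (\<Sum>i\<le>n. monom (coeff p i) i) x"
    using poly_as_sum_of_monoms'[OF assms] by simp
  also have "\<dots> = (\<Sum>i\<le>n. coeff p i * x ^ i)"
    by (simp add: poly_sum poly_monom)
  finally show ?thesis .
qed

lemma homog_degs:
  assumes "homogeneous3 F N"
  shows "degree (coeff (coeff F k) j) \<le> N" "degree (coeff F k) \<le> N" "degree F \<le> N"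
proof -
  have z: "coeff3 F i j k = 0" if "i > N \<or> j > N \<or> k > N" for i j k
    using assms that unfolding homogeneous3_def by fastforce
  show "degree (coeff (coeff F k) j) \<le> N"
    by (rule degree_le) (use z in \<open>auto simp: coeff3_def\<close>)
  show "degree (coeff F k) \<le> N"
    by (rule degree_le) (use z in \<open>auto simp: coeff3_def poly_eq_iff\<close>)
  show "degree F \<le> N"
    by (rule degree_le) (use z in \<open>auto simp: coeff3_def poly_eq_iff\<close>)
qed

lemma eval3_expand:
  assumes "homogeneous3 F N"
  shows "eval3 F x y z = (\<Sum>k\<le>N. \<Sum>j\<le>N. \<Sum>i\<le>N. coeff3 F i j k * x ^ i * y ^ j * z ^ k)"
proof -
  note d = homog_degs[OF assms]
  have "eval3 F x y z = poly (poly (\<Sum>k\<le>N. coeff F k * [:[:z:]:] ^ k) [:y:]) x"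
    unfolding eval3_def using poly_sum_bound[OF d(3)] by simp
  also have "\<dots> = (\<Sum>k\<le>N. poly (poly (coeff F k) [:y:]) x * z ^ k)"
    by (simp add: poly_sum)
  also have "\<dots> = (\<Sum>k\<le>N. poly (\<Sum>j\<le>N. coeff (coeff F k) j * [:y:] ^ j) x * z ^ k)"
    using poly_sum_bound[OF d(2)] by simp
  also have "\<dots> = (\<Sum>k\<le>N. (\<Sum>j\<le>N. poly (coeff (coeff F k) j) x * y ^ j) * z ^ k)"
    by (simp add: poly_sum)
  also have "\<dots> = (\<Sum>k\<le>N. (\<Sum>j\<le>N. (\<Sum>i\<le>N. coeff3 F i j k * x ^ i) * y ^ j) * z ^ k)"
    using poly_sum_bound[OF d(1)] by (simp add: coeff3_def)
  also have "\<dots> = (\<Sum>k\<le>N. \<Sum>j\<le>N. \<Sum>i\<le>N. coeff3 F i j k * x ^ i * y ^ j * z ^ k)"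
    by (simp add: sum_distrib_right)
  finally show ?thesis .
qed

lemma eval3_scale:
  assumes "homogeneous3 F N"
  shows "eval3 F (l * x) (l * y) (l * z) = l ^ N * eval3 F x y z"
proof -
  have t: "coeff3 F i j k * (l * x) ^ i * (l * y) ^ j * (l * z) ^ k
      = l ^ N * (coeff3 F i j k * x ^ i * y ^ j * z ^ k)" for i j k
  proof (cases "coeff3 F i j k = 0")
    case False
    hence "i + j + k = N" using assms unfolding homogeneous3_def by blast
    hence "l ^ N = l ^ i * l ^ j * l ^ k" by (metis power_add)
    thus ?thesis by (simp add: power_mult_distrib algebra_simps)
  qed simp
  show ?thesis unfolding eval3_expand[OF assms] t by (simp add: sum_distrib_left)
qed

definition ev :: "'a::comm_ring_1 poly3 \<Rightarrow> 'a \<times> 'a \<times> 'a \<Rightarrow> 'a" where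
  "ev F v = eval3 F (fst v) (fst (snd v)) (snd (snd v))"
definition sc :: "'a::comm_ring_1 \<Rightarrow> 'a \<times> 'a \<times> 'a \<Rightarrow> 'a \<times> 'a \<times> 'a" where
  "sc l v = (l * fst v, l * fst (snd v), l * snd (snd v))"
definition vadd :: "'a::comm_ring_1 \<times> 'a \<times> 'a \<Rightarrow> 'a \<times> 'a \<times> 'a \<Rightarrow> 'a \<times> 'a \<times> 'a" where
  "vadd v w = (fst v + fst w, fst (snd v) + fst (snd w), snd (snd v) + snd (snd w))"
definition dot :: "'a::comm_ring_1 \<times> 'a \<times> 'a \<Rightarrow> 'a \<times> 'a \<times> 'a \<Rightarrow> 'a" where
  "dot v w = fst v * fst w + fst (snd v) * fst (snd w) + snd (snd v) * snd (snd w)"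
definition cross :: "'a::comm_ring_1 \<times> 'a \<times> 'a \<Rightarrow> 'a \<times> 'a \<times> 'a \<Rightarrow> 'a \<times> 'a \<times> 'a" where
  "cross v w = (fst (snd v) * snd (snd w) - snd (snd v) * fst (snd w),
                snd (snd v) * fst w - fst v * snd (snd w),
                fst v * fst (snd w) - fst (snd v) * fst w)"
definition lc :: "'a::comm_ring_1 \<Rightarrow> 'a \<times> 'a \<times> 'a \<Rightarrow> 'a \<times> 'a \<times> 'a \<Rightarrow> 'a \<times> 'a \<times> 'a" where
  "lc s u p = vadd (sc s u) p"

definition Gsub :: "'a::comm_ring_1 poly3 \<Rightarrow> nat \<Rightarrow> 'a \<times> 'a \<times> 'a \<Rightarrow> 'a \<times> 'a \<times> 'a \<Rightarrow> 'a \<times> 'a \<times> 'a \<Rightarrow> 'a poly3" where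
  "Gsub F N u v w = (\<Sum>k\<le>N. \<Sum>j\<le>N. \<Sum>i\<le>N. const3 (coeff3 F i j k)
     * lin_form (fst u) (fst v) (fst w) ^ i
     * lin_form (fst (snd u)) (fst (snd v)) (fst (snd w)) ^ j
     * lin_form (snd (snd u)) (snd (snd v)) (snd (snd w)) ^ k)"

lemma Gsub_eval:
  assumes "homogeneous3 F N"
  shows "eval3 (Gsub F N u v w) s a b = ev F (vadd (vadd (sc s u) (sc a v)) (sc b w))"
  unfolding Gsub_def ev_def eval3_expand[OF assms]
  by (simp add: vadd_def sc_def algebra_simps)

lemma Gsub_homog:
  assumes "homogeneous3 F N"
  shows "homogeneous3 (Gsub F N u v w) N"
  unfolding Gsub_def
proof (intro homog_sum)
  fix k j i
  show "homogeneous3 (const3 (coeff3 F i j k)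
     * lin_form (fst u) (fst v) (fst w) ^ i
     * lin_form (fst (snd u)) (fst (snd v)) (fst (snd w)) ^ j
     * lin_form (snd (snd u)) (snd (snd v)) (snd (snd w)) ^ k) N"
  proof (cases "coeff3 F i j k = 0")
    case True
    then show ?thesis by (simp add: const3_def)
  next
    case False
    hence e: "N = 0 + i * 1 + j * 1 + k * 1" using assms unfolding homogeneous3_def by simp
    show ?thesis unfolding e
      by (intro homog_mult homog_power homog_const3 homog_lin_form)
  qed
qed

definition Bc :: "'a::comm_ring_1 poly3 \<Rightarrow> nat \<Rightarrow> nat \<Rightarrow> 'a \<Rightarrow> 'a \<Rightarrow> 'a" where
  "Bc G N m a b = (\<Sum>j\<le>N. \<Sum>k\<le>N. coeff3 G m j k * a ^ j * b ^ k)"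
definition Phi :: "'a::comm_ring_1 poly3 \<Rightarrow> nat \<Rightarrow> 'a \<Rightarrow> 'a \<Rightarrow> 'a poly" where
  "Phi G N a b = (\<Sum>m\<le>N. monom (Bc G N m a b) m)"
definition U :: "'a::comm_ring_1 poly3 \<Rightarrow> nat \<Rightarrow> nat \<Rightarrow> 'a poly" where
  "U G N m = (\<Sum>j\<le>N. monom (coeff3 G m j (N - m - j)) j)"

lemma gk:
  assumes "homogeneous3 G N"
  shows "coeff3 G m j k = (if k = N - m - j then coeff3 G m j (N - m - j) else 0)"
proof (cases "coeff3 G m j k = 0")
  case True thus ?thesis by auto
next
  case False hence "m + j + k = N" using assms unfolding homogeneous3_def by blast
  hence "k = N - m - j" by arith
  thus ?thesis by simp
qed

lemma hz:
  assumes "homogeneous3 G N" "i + j + k \<noteq> N"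
  shows "coeff3 G i j k = 0"
  using assms unfolding homogeneous3_def by blast

lemma sum_swap3:
  "(\<Sum>k\<le>N. \<Sum>j\<le>N. \<Sum>i\<le>N. f i j k) = (\<Sum>i\<le>N. \<Sum>j\<le>N. \<Sum>k\<le>(N::nat). f i j k)"
proof -
  have "(\<Sum>k\<le>N. \<Sum>j\<le>N. \<Sum>i\<le>N. f i j k) = (\<Sum>k\<le>N. \<Sum>i\<le>N. \<Sum>j\<le>N. f i j k)"
    by (rule sum.cong[OF refl], rule sum.swap)
  also have "\<dots> = (\<Sum>i\<le>N. \<Sum>k\<le>N. \<Sum>j\<le>N. f i j k)"
    by (rule sum.swap)
  also have "\<dots> = (\<Sum>i\<le>N. \<Sum>j\<le>N. \<Sum>k\<le>N. f i j k)"
    by (rule sum.cong[OF refl], rule sum.swap)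
  finally show ?thesis .
qed

lemma poly_Phi:
  assumes "homogeneous3 G N"
  shows "poly (Phi G N a b) s = eval3 G s a b"
proof -
  have "poly (Phi G N a b) s = (\<Sum>m\<le>N. Bc G N m a b * s ^ m)"
    unfolding Phi_def by (simp add: poly_sum poly_monom)
  also have "\<dots> = (\<Sum>m\<le>N. \<Sum>j\<le>N. \<Sum>k\<le>N. coeff3 G m j k * a ^ j * b ^ k * s ^ m)"
    unfolding Bc_def sum_distrib_right ..
  also have "\<dots> = (\<Sum>m\<le>N. \<Sum>j\<le>N. \<Sum>k\<le>N. coeff3 G m j k * s ^ m * a ^ j * b ^ k)"
    by (intro sum.cong refl) (simp only: mult_ac)
  also have "\<dots> = eval3 G s a b"
    unfolding eval3_expand[OF assms]
    using sum_swap3[of "\<lambda>i j k. coeff3 G i j k * s ^ i * a ^ j * b ^ k" N] by simp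
  finally show ?thesis .
qed

lemma coeff_Phi: "coeff (Phi G N a b) m = (if m \<le> N then Bc G N m a b else 0)"
  unfolding Phi_def by (simp add: coeff_sum)

lemma degree_Phi: "degree (Phi G N a b) \<le> N"
  by (rule degree_le) (simp add: coeff_Phi)

lemma Bc_top:
  assumes "homogeneous3 G N"
  shows "Bc G N N a b = coeff3 G N 0 0"
proof -
  have "coeff3 G N j k * a ^ j * b ^ k = (if k = 0 then (if j = 0 then coeff3 G N 0 0 else 0) else 0)" for j k
    by (cases "j = 0 \<and> k = 0") (auto simp: hz[OF assms] power_0_left)
  thus ?thesis unfolding Bc_def by simp
qed

lemma eval_100:
  assumes "homogeneous3 G N"
  shows "eval3 G 1 0 0 = coeff3 G N 0 0"
proof -
  have "coeff3 G i j k * 1 ^ i * 0 ^ j * 0 ^ k = (if i = N then (if j = 0 then (if k = 0 then coeff3 G N 0 0 else 0) else 0) else 0)" for i j k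
    by (cases "k = 0"; cases "j = 0"; cases "i = N") (auto simp: hz[OF assms] power_0_left)
  thus ?thesis unfolding eval3_expand[OF assms] by simp
qed

lemma coeff_U: "coeff (U G N m) j = (if j \<le> N then coeff3 G m j (N - m - j) else 0)"
  unfolding U_def by (simp add: coeff_sum)

lemma degree_U:
  assumes "homogeneous3 G N"
  shows "degree (U G N m) \<le> N - m"
proof (rule degree_le, intro allI impI)
  fix j assume "N - m < j"
  show "coeff (U G N m) j = 0"
    using \<open>N - m < j\<close> unfolding coeff_U by (auto simp: hz[OF assms])
qed

lemma poly_U:
  assumes "homogeneous3 G N"
  shows "poly (U G N m) t = Bc G N m t 1"
proof -
  have "(\<Sum>k\<le>N. coeff3 G m j k * t ^ j * 1 ^ k) = coeff3 G m j (N - m - j) * t ^ j" for j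
  proof -
    have "(\<Sum>k\<le>N. coeff3 G m j k * t ^ j * 1 ^ k)
        = (\<Sum>k\<le>N. if k = N - m - j then coeff3 G m j (N - m - j) * t ^ j else 0)"
      by (rule sum.cong[OF refl]) (subst gk[OF assms], simp)
    also have "\<dots> = coeff3 G m j (N - m - j) * t ^ j" by simp
    finally show ?thesis .
  qed
  thus ?thesis unfolding U_def Bc_def by (simp add: poly_sum poly_monom)
qed

lemma U_zero:
  assumes "homogeneous3 G N" "U G N m = 0"
  shows "Bc G N m a b = 0"
proof -
  have "coeff3 G m j k = 0" if "j \<le> N" for j k
    using gk[OF assms(1), of m j k] arg_cong[OF assms(2), of "\<lambda>p. coeff p j"] that
    by (simp add: coeff_U)
  thus ?thesis unfolding Bc_def by simp
qed

lemma Bc_10: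
  assumes "homogeneous3 G N" "m \<le> N"
  shows "Bc G N m 1 0 = coeff (U G N m) (N - m)"
proof -
  have "coeff3 G m j k * 1 ^ j * 0 ^ k = (if k = 0 then (if j = N - m then coeff3 G m (N - m) 0 else 0) else 0)" for j k
    using assms(2) by (cases "k = 0"; cases "j = N - m") (auto simp: hz[OF assms(1)] power_0_left)
  thus ?thesis unfolding Bc_def coeff_U using assms(2) by simp
qed

lemma Bc_01:
  assumes "homogeneous3 G N" "m \<le> N"
  shows "Bc G N m 0 1 = coeff (U G N m) 0"
proof -
  have "coeff3 G m j k * 0 ^ j * 1 ^ k = (if k = N - m then (if j = 0 then coeff3 G m 0 (N - m) else 0) else 0)" for j k
    using assms(2) by (cases "j = 0"; cases "k = N - m") (auto simp: hz[OF assms(1)] power_0_left)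
  thus ?thesis unfolding Bc_def coeff_U using assms(2) by simp
qed

lemma sc_simp[simp]: "sc l (x, y, z) = (l * x, l * y, l * z)" by (simp add: sc_def)
lemma vadd_simp[simp]: "vadd (a, b, c) (x, y, z) = (a + x, b + y, c + z)" by (simp add: vadd_def)
lemma dot_simp[simp]: "dot (a, b, c) (x, y, z) = a * x + b * y + c * z" by (simp add: dot_def)
lemma cross_simp[simp]: "cross (a, b, c) (x, y, z) = (b * z - c * y, c * x - a * z, a * y - b * x)"
  by (simp add: cross_def)
lemma lc_simp[simp]: "lc s (a, b, c) (x, y, z) = (s * a + x, s * b + y, s * c + z)"
  by (simp add: lc_def)
lemma ev_simp[simp]: "ev F (x, y, z) = eval3 F x y z" by (simp add: ev_def)

lemma sc_sc[simp]: "sc a (sc b v) = sc (a * b) v" by (cases v) (simp add: mult.assoc)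
lemma sc_one[simp]: "sc 1 v = v" by (cases v) simp
lemma sc_eq_0: "sc (l::'a::field) v = (0, 0, 0) \<longleftrightarrow> l = 0 \<or> v = (0, 0, 0)"
  by (cases v) auto
lemma dot_sc[simp]: "dot n (sc l v) = l * dot n v" by (cases n; cases v) (simp add: algebra_simps)
lemma dot_sc_left[simp]: "dot (sc l n) v = l * dot n v" by (cases n; cases v) (simp add: algebra_simps)

lemma mem_proj: "w \<in> proj_pt v \<longleftrightarrow> (\<exists>l. l \<noteq> 0 \<and> w = sc l v)"
  by (cases v) (auto simp: proj_pt_def)

lemma proj_self: "v \<in> proj_pt (v::'a::field \<times> 'a \<times> 'a)"
  unfolding mem_proj by (rule exI[of _ 1]) simp

lemma proj_eq: "proj_pt v = proj_pt w \<longleftrightarrow> (\<exists>l::'a::field. l \<noteq> 0 \<and> v = sc l w)"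
proof
  assume "proj_pt v = proj_pt w"
  thus "\<exists>l. l \<noteq> 0 \<and> v = sc l w" using proj_self[of v] by (simp add: mem_proj)
next
  assume "\<exists>l. l \<noteq> 0 \<and> v = sc l w"
  then obtain l where l: "l \<noteq> 0" "v = sc l w" by blast
  show "proj_pt v = proj_pt w"
  proof (rule set_eqI)
    fix x
    show "x \<in> proj_pt v \<longleftrightarrow> x \<in> proj_pt w"
      unfolding mem_proj l(2) sc_sc
    proof
      assume "\<exists>m. m \<noteq> 0 \<and> x = sc (m * l) w" thus "\<exists>m. m \<noteq> 0 \<and> x = sc m w"
        using l(1) by (metis mult_eq_0_iff)
    next
      assume "\<exists>m. m \<noteq> 0 \<and> x = sc m w"
      then obtain m where "m \<noteq> 0" "x = sc m w" by blast
      thus "\<exists>m. m \<noteq> 0 \<and> x = sc (m * l) w"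
        using l(1) by (intro exI[of _ "m / l"]) auto
    qed
  qed
qed

lemma proj_in_P2: "v \<noteq> (0, 0, 0) \<Longrightarrow> proj_pt v \<in> P2" unfolding P2_def by blast
lemma P2_E: "P \<in> P2 \<Longrightarrow> \<exists>v. v \<noteq> (0, 0, 0) \<and> P = proj_pt v" by (auto simp: P2_def)

lemma ev_sc:
  assumes "homogeneous3 F N" shows "ev F (sc l v) = l ^ N * ev F v"
  by (cases v) (simp add: eval3_scale[OF assms])

lemma curve_iff:
  fixes F :: "'a::field poly3"
  assumes "homogeneous3 F N" "v \<noteq> (0, 0, 0)"
  shows "proj_pt v \<in> curve_pts F \<longleftrightarrow> ev F v = 0"
proof -
  have "(\<forall>w\<in>proj_pt v. ev F w = 0) \<longleftrightarrow> ev F v = 0"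
  proof
    assume "\<forall>w\<in>proj_pt v. ev F w = 0" thus "ev F v = 0" using proj_self by blast
  next
    assume h: "ev F v = 0"
    show "\<forall>w\<in>proj_pt v. ev F w = 0"
    proof
      fix w assume "w \<in> proj_pt v"
      then obtain l where "w = sc l v" by (auto simp: mem_proj)
      thus "ev F w = 0" using h ev_sc[OF assms(1)] by simp
    qed
  qed
  moreover have "(\<forall>(x, y, z)\<in>proj_pt v. eval3 F x y z = 0) \<longleftrightarrow> (\<forall>w\<in>proj_pt v. ev F w = 0)"
    by (auto simp: ev_def)
  ultimately show ?thesis unfolding curve_pts_def using proj_in_P2[OF assms(2)] by auto
qed

definition lineof :: "'a::field \<times> 'a \<times> 'a \<Rightarrow> ('a \<times> 'a \<times> 'a) set set" where
  "lineof n = proj_line (fst n) (fst (snd n)) (snd (snd n))"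

lemma line_iff:
  assumes "v \<noteq> (0, 0, 0)"
  shows "proj_pt v \<in> lineof n \<longleftrightarrow> dot n v = 0"
proof -
  have "(\<forall>w\<in>proj_pt v. dot n w = 0) \<longleftrightarrow> dot n v = 0"
  proof
    assume "\<forall>w\<in>proj_pt v. dot n w = 0" thus "dot n v = 0" using proj_self by blast
  next
    assume h: "dot n v = 0"
    show "\<forall>w\<in>proj_pt v. dot n w = 0"
    proof
      fix w assume "w \<in> proj_pt v"
      then obtain l where "w = sc l v" by (auto simp: mem_proj)
      thus "dot n w = 0" using h by simp
    qed
  qed
  moreover have "(\<forall>(x, y, z)\<in>proj_pt v. fst n * x + fst (snd n) * y + snd (snd n) * z = 0)
      \<longleftrightarrow> (\<forall>w\<in>proj_pt v. dot n w = 0)"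
    by (auto simp: dot_def)
  ultimately show ?thesis unfolding lineof_def proj_line_def using proj_in_P2[OF assms] by auto
qed

lemma lineof_sub: "lineof n \<subseteq> P2" by (auto simp: lineof_def proj_line_def)

lemma lines_eq: "lines = {lineof n | n. n \<noteq> (0, 0, 0)}"
  unfolding lines_def lineof_def by force

lemma cross_zero_prop:
  fixes u v :: "'a::field \<times> 'a \<times> 'a"
  assumes "cross u v = (0, 0, 0)" "u \<noteq> (0, 0, 0)"
  shows "\<exists>l. v = sc l u"
proof -
  obtain u1 u2 u3 where u: "u = (u1, u2, u3)" by (cases u) auto
  obtain v1 v2 v3 where v: "v = (v1, v2, v3)" by (cases v) auto
  have e: "u2 * v3 = u3 * v2" "u3 * v1 = u1 * v3" "u1 * v2 = u2 * v1"
    using assms(1) unfolding u v by auto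
  show ?thesis
  proof (cases "u1 \<noteq> 0")
    case True
    show ?thesis unfolding u v
      by (rule exI[of _ "v1 / u1"]) (use True e in \<open>auto simp: field_simps\<close>)
  next
    case f1: False
    show ?thesis
    proof (cases "u2 \<noteq> 0")
      case True
      show ?thesis unfolding u v
        by (rule exI[of _ "v2 / u2"]) (use True f1 e in \<open>auto simp: field_simps\<close>)
    next
      case False
      hence "u3 \<noteq> 0" using f1 assms(2) u by auto
      show ?thesis unfolding u v
        by (rule exI[of _ "v3 / u3"]) (use \<open>u3 \<noteq> 0\<close> False f1 e in \<open>auto simp: field_simps\<close>)
    qed
  qed
qed

lemma cross_cross: "cross n (cross u v) = vadd (sc (dot n v) u) (sc (- dot n u) v)"
  by (cases n; cases u; cases v) (simp add: algebra_simps)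

lemma cross_perp:
  fixes n :: "'a::field \<times> 'a \<times> 'a"
  assumes "n \<noteq> (0, 0, 0)" "dot n u = 0" "dot n v = 0"
  shows "\<exists>l. cross u v = sc l n"
proof -
  have "cross n (cross u v) = (0, 0, 0)"
    unfolding cross_cross assms by (cases u; cases v) simp
  thus ?thesis using cross_zero_prop assms(1) by blast
qed

lemma dot_cross_1[simp]: "dot (cross u v) u = 0"
  by (cases u; cases v) (simp add: algebra_simps)
lemma dot_cross_2[simp]: "dot (cross u v) v = 0"
  by (cases u; cases v) (simp add: algebra_simps)
lemma cross_sc_left[simp]: "cross (sc l u) v = sc l (cross u v)"
  by (cases u; cases v) (simp add: algebra_simps)
lemma cross_sc_right[simp]: "cross u (sc l v) = sc l (cross u v)"
  by (cases u; cases v) (simp add: algebra_simps)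
lemma cross_self[simp]: "cross u u = (0, 0, 0)"
  by (cases u) (simp add: algebra_simps)

lemma proj_eq_cross:
  fixes u v :: "'a::field \<times> 'a \<times> 'a"
  assumes "u \<noteq> (0, 0, 0)" "v \<noteq> (0, 0, 0)"
  shows "proj_pt u = proj_pt v \<longleftrightarrow> cross u v = (0, 0, 0)"
proof
  assume "proj_pt u = proj_pt v"
  then obtain l where "u = sc l v" using proj_eq by blast
  thus "cross u v = (0, 0, 0)" by (cases v) simp
next
  assume "cross u v = (0, 0, 0)"
  then obtain l where l: "v = sc l u" using cross_zero_prop assms(1) by blast
  hence "l \<noteq> 0" using assms(2) by (auto simp: sc_eq_0)
  hence "u = sc (1 / l) v" using l by simp
  thus "proj_pt u = proj_pt v" using proj_eq \<open>l \<noteq> 0\<close> by (metis divide_eq_0_iff one_neq_zero)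
qed

lemma lineof_eqI:
  assumes "\<And>v. v \<noteq> (0, 0, 0) \<Longrightarrow> dot n v = 0 \<longleftrightarrow> dot n' v = 0"
  shows "lineof n = lineof n'"
proof (rule set_eqI)
  fix P
  show "P \<in> lineof n \<longleftrightarrow> P \<in> lineof n'"
  proof (cases "P \<in> P2")
    case True
    then obtain v where "v \<noteq> (0, 0, 0)" "P = proj_pt v" using P2_E by blast
    thus ?thesis using line_iff assms by metis
  next
    case False thus ?thesis using lineof_sub by blast
  qed
qed

lemma lineof_sc: "l \<noteq> 0 \<Longrightarrow> lineof (sc (l::'a::field) n) = lineof n"
  by (rule lineof_eqI) simp

lemma two_points_line:
  fixes u v n :: "'a::field \<times> 'a \<times> 'a"
  assumes "cross u v \<noteq> (0, 0, 0)" "n \<noteq> (0, 0, 0)" "dot n u = 0" "dot n v = 0"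
  shows "lineof n = lineof (cross u v)"
proof -
  obtain l where l: "cross u v = sc l n" using cross_perp assms(2-4) by blast
  hence "l \<noteq> 0" using assms(1) by (auto simp: sc_eq_0)
  thus ?thesis using l lineof_sc by metis
qed

lemma lc_nz:
  fixes u p :: "'a::field \<times> 'a \<times> 'a"
  assumes "cross u p \<noteq> (0, 0, 0)" shows "lc s u p \<noteq> (0, 0, 0)"
proof
  assume h: "lc s u p = (0, 0, 0)"
  have "cross u (lc s u p) = cross u p"
    by (cases u; cases p) (simp add: algebra_simps)
  with h assms show False by (cases u) simp
qed

lemma cross_lc: "cross u (lc s u p) = cross u p"
  by (cases u; cases p) (simp add: algebra_simps)

lemma dot_lc: "dot n (lc s u p) = s * dot n u + dot n p"
  by (cases n; cases u; cases p) (simp add: algebra_simps)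

lemma cross_nz_left: "cross u p \<noteq> (0, 0, 0) \<Longrightarrow> u \<noteq> (0, 0, 0)" by (cases p) auto
lemma cross_nz_right: "cross u p \<noteq> (0, 0, 0) \<Longrightarrow> p \<noteq> (0, 0, 0)" by (cases u) auto

lemma cross_cross_same:
  "cross (cross u p) (cross u w) = sc (dot (cross u p) w) u"
  by (cases u; cases p; cases w) (simp add: algebra_simps)

lemma line_param:
  fixes u p :: "'a::field \<times> 'a \<times> 'a"
  assumes cp: "cross u p \<noteq> (0, 0, 0)"
  shows "lineof (cross u p) = insert (proj_pt u) (range (\<lambda>s. proj_pt (lc s u p)))"
    and "inj (\<lambda>s. proj_pt (lc s u p))"
    and "proj_pt u \<notin> range (\<lambda>s. proj_pt (lc s u p))"
proof -
  have u0: "u \<noteq> (0, 0, 0)" using cp by (cases p) auto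
  have p0: "p \<noteq> (0, 0, 0)" using cp by (cases u) auto
  note lnz = lc_nz[OF cp]
  show "lineof (cross u p) = insert (proj_pt u) (range (\<lambda>s. proj_pt (lc s u p)))"
  proof (rule set_eqI, rule iffI)
    fix P assume P: "P \<in> lineof (cross u p)"
    then obtain w where w: "w \<noteq> (0, 0, 0)" "P = proj_pt w" using lineof_sub P2_E by blast
    hence dw: "dot (cross u p) w = 0" using P line_iff by blast
    show "P \<in> insert (proj_pt u) (range (\<lambda>s. proj_pt (lc s u p)))"
    proof (cases "cross u w = (0, 0, 0)")
      case True
      hence "proj_pt u = P" using proj_eq_cross u0 w by blast
      thus ?thesis by blast
    next
      case False
      have "cross (cross u p) (cross u w) = (0, 0, 0)"
        unfolding cross_cross_same dw by (cases u) simp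
      then obtain l where l: "cross u w = sc l (cross u p)" using cross_zero_prop cp by blast
      hence l0: "l \<noteq> 0" using False by (auto simp: sc_eq_0)
      have "cross u (vadd w (sc (- l) p)) = (0, 0, 0)"
        using l by (cases u; cases w; cases p) (simp add: algebra_simps)
      then obtain m where m: "vadd w (sc (- l) p) = sc m u" using cross_zero_prop u0 by blast
      have "w = sc l (lc (m / l) u p)"
        using m l0 by (cases u; cases w; cases p) (auto simp: field_simps)
      hence "P = proj_pt (lc (m / l) u p)" using w(2) proj_eq l0 by blast
      thus ?thesis by blast
    qed
  next
    fix P assume "P \<in> insert (proj_pt u) (range (\<lambda>s. proj_pt (lc s u p)))"
    thus "P \<in> lineof (cross u p)"
      using line_iff[OF u0, where n="cross u p"] line_iff[OF lnz, where n="cross u p"] by (auto simp: dot_lc)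
  qed
  show "inj (\<lambda>s. proj_pt (lc s u p))"
  proof (rule injI)
    fix s t assume "proj_pt (lc s u p) = proj_pt (lc t u p)"
    hence "cross (lc s u p) (lc t u p) = (0, 0, 0)" using proj_eq_cross lnz by blast
    hence "sc (t - s) (cross u p) = (0, 0, 0)"
      by (cases u; cases p) (simp add: algebra_simps)
    thus "s = t" using cp by (simp add: sc_eq_0)
  qed
  show "proj_pt u \<notin> range (\<lambda>s. proj_pt (lc s u p))"
  proof
    assume "proj_pt u \<in> range (\<lambda>s. proj_pt (lc s u p))"
    then obtain s where "proj_pt u = proj_pt (lc s u p)" by blast
    hence "cross u (lc s u p) = (0, 0, 0)" using proj_eq_cross lnz u0 by blast
    thus False using cp cross_lc by metis
  qed
qed

lemma line_card:
  fixes u p :: "'a::{finite,field} \<times> 'a \<times> 'a"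
  assumes cp: "cross u p \<noteq> (0, 0, 0)"
  shows "card (lineof (cross u p)) = CARD('a) + 1"
proof -
  have "card (range (\<lambda>s. proj_pt (lc s u p))) = CARD('a)"
    using line_param(2)[OF cp] by (simp add: card_image)
  thus ?thesis unfolding line_param(1)[OF cp] using line_param(3)[OF cp] by simp
qed

lemma lines_meet:
  fixes n n' :: "'a::field \<times> 'a \<times> 'a"
  assumes "n \<noteq> (0, 0, 0)" "n' \<noteq> (0, 0, 0)" "lineof n \<noteq> lineof n'"
  shows "\<exists>P. P \<in> lineof n \<and> P \<in> lineof n'"
proof (cases "cross n n' = (0, 0, 0)")
  case True
  then obtain l where l: "n' = sc l n" using cross_zero_prop assms(1) by blast
  hence "l \<noteq> 0" using assms(2) by (auto simp: sc_eq_0)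
  hence "lineof n' = lineof n" using l lineof_sc by metis
  with assms(3) show ?thesis by simp
next
  case False
  have "dot n (cross n n') = 0" "dot n' (cross n n') = 0"
    by (cases n; cases n'; simp add: algebra_simps)+
  thus ?thesis using line_iff[OF False] by blast
qed

definition PhiV :: "'a::comm_ring_1 poly3 \<Rightarrow> nat \<Rightarrow> 'a \<times> 'a \<times> 'a \<Rightarrow> 'a \<times> 'a \<times> 'a \<Rightarrow> 'a poly" where
  "PhiV F N u p = Phi (Gsub F N u p (0, 0, 0)) N 1 0"

locale cfg =
  fixes F :: "'a::{finite,field} poly3" and N :: nat and u :: "'a \<times> 'a \<times> 'a"
  assumes hom: "homogeneous3 F N" and cardN: "CARD('a) = N + 1" and N7: "N \<ge> 7"
    and u0: "u \<noteq> (0, 0, 0)" and cu: "ev F u \<noteq> 0"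
begin

abbreviation "X \<equiv> curve_pts F"
abbreviation "Q \<equiv> proj_pt u"
abbreviation "c \<equiv> ev F u"
definition "Ph p = PhiV F N u p"
definition "nr p = card {s. poly (Ph p) s = 0}"
definition "L p = lineof (cross u p)"

lemma poly_Ph: "poly (Ph p) s = ev F (lc s u p)"
  unfolding Ph_def PhiV_def poly_Phi[OF Gsub_homog[OF hom]] Gsub_eval[OF hom]
  by (cases u; cases p) simp

lemma degree_Ph: "degree (Ph p) \<le> N"
  unfolding Ph_def PhiV_def by (rule degree_Phi)

lemma coeff_Ph_top: "coeff (Ph p) N = c"
proof -
  have "coeff (Ph p) N = coeff3 (Gsub F N u p (0, 0, 0)) N 0 0"
    unfolding Ph_def PhiV_def coeff_Phi using Bc_top[OF Gsub_homog[OF hom]] by simp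
  also have "\<dots> = eval3 (Gsub F N u p (0, 0, 0)) 1 0 0"
    using eval_100[OF Gsub_homog[OF hom]] by simp
  also have "\<dots> = c" unfolding Gsub_eval[OF hom] by (cases u; cases p) simp
  finally show ?thesis .
qed

lemma Ph_nz: "Ph p \<noteq> 0"
  using coeff_Ph_top[of p] cu by auto

lemma coeff_const_N[simp]: "coeff [:a:] N = 0"
  using N7 by (cases N) auto

lemma coeff_const_N1[simp]: "coeff [:a:] (N - Suc 0) = 0"
  using N7 by (cases "N - Suc 0") auto

lemma nr_le: "nr p \<le> N"
  unfolding nr_def using card_poly_roots_bound[OF Ph_nz, of p] degree_Ph[of p] by linarith

lemma N_pow: "(z::'a) \<noteq> 0 \<Longrightarrow> z ^ N = 1"
  using ff_pow[of z] cardN by simp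

lemma ofN: "(of_nat N :: 'a) = - 1"
proof -
  have "(of_nat (N + 1) :: 'a) = 0" using ff_char cardN by metis
  thus ?thesis by (simp add: eq_neg_iff_add_eq_0 add.commute)
qed

lemma Q_notin: "Q \<notin> X"
  using curve_iff[OF hom u0] cu by simp

lemma Q_P2: "Q \<in> P2" using proj_in_P2[OF u0] .

lemma LX:
  assumes cp: "cross u p \<noteq> (0, 0, 0)"
  shows "L p \<inter> X = (\<lambda>s. proj_pt (lc s u p)) ` {s. poly (Ph p) s = 0}"
    and "card (L p \<inter> X) = nr p"
proof -
  show e: "L p \<inter> X = (\<lambda>s. proj_pt (lc s u p)) ` {s. poly (Ph p) s = 0}"
    unfolding L_def line_param(1)[OF cp] poly_Ph
    using Q_notin curve_iff[OF hom lc_nz[OF cp]] by auto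
  show "card (L p \<inter> X) = nr p"
    unfolding e nr_def
    by (rule card_image, rule inj_on_subset[OF line_param(2)[OF cp]]) simp
qed

lemma full_s0:
  assumes "nr p = N"
  shows "\<exists>s0. \<forall>s. poly (Ph p) s = 0 \<longleftrightarrow> s \<noteq> s0"
proof -
  let ?S = "{s. poly (Ph p) s = 0}"
  have "card (UNIV - ?S) = 1"
    using assms cardN unfolding nr_def by (simp add: card_Diff_subset)
  then obtain s0 where "UNIV - ?S = {s0}" by (rule card_1_singletonE)
  hence "\<forall>s. poly (Ph p) s = 0 \<longleftrightarrow> s \<noteq> s0" by blast
  thus ?thesis by blast
qed

lemma Ph_std:
  assumes "\<And>s. poly (Ph p) s = 0 \<longleftrightarrow> s \<noteq> 0"
  shows "Ph p = monom c N - [:c:]"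
proof (rule poly_eqI_degree_lead_coeff[where n = N and A = "UNIV - {0}"])
  show "coeff (Ph p) N = coeff (monom c N - [:c:]) N" using coeff_Ph_top N7 by simp
  show "N \<le> card (UNIV - {0::'a})" using cardN by (simp add: card_Diff_subset)
  show "degree (Ph p) \<le> N" by (rule degree_Ph)
  show "degree (monom c N - [:c:]) \<le> N"
    by (rule order.trans[OF degree_diff_le_max]) (simp add: degree_monom_le)
  fix z :: 'a assume "z \<in> UNIV - {0}"
  hence "z \<noteq> 0" by simp
  thus "poly (Ph p) z = poly (monom c N - [:c:]) z"
    using assms[of z] N_pow[of z] by (simp add: poly_monom)
qed

lemma Ph_shift_zero:
  assumes "\<And>s. poly (Ph p) s = 0 \<longleftrightarrow> s \<noteq> s0" and "coeff (Ph p) (N - 1) = 0"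
  shows "s0 = 0"
proof -
  have "Ph p = smult c ([:-s0, 1:] ^ N) - [:c:]"
  proof (rule poly_eqI_degree_lead_coeff[where n = N and A = "UNIV - {s0}"])
    show "coeff (Ph p) N = coeff (smult c ([:-s0, 1:] ^ N) - [:c:]) N"
      using coeff_Ph_top N7 by (simp add: coeff_linear_power)
    show "N \<le> card (UNIV - {s0})" using cardN by (simp add: card_Diff_subset)
    show "degree (Ph p) \<le> N" by (rule degree_Ph)
    have "degree (smult c ([:-s0, 1:] ^ N)) \<le> N"
      by (rule order.trans[OF degree_smult_le]) (simp add: degree_power_eq)
    thus "degree (smult c ([:-s0, 1:] ^ N) - [:c:]) \<le> N"
      by (intro order.trans[OF degree_diff_le_max]) simp
    fix z :: 'a assume "z \<in> UNIV - {s0}"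
    hence "z - s0 \<noteq> 0" by simp
    hence "(z - s0) ^ N = 1" by (rule N_pow)
    thus "poly (Ph p) z = poly (smult c ([:-s0, 1:] ^ N) - [:c:]) z"
      using assms(1)[of z] \<open>z \<in> UNIV - {s0}\<close> by simp
  qed
  hence "coeff (Ph p) (N - 1) = c * coeff ([:-s0, 1:] ^ N) (N - 1)"
    using N7 by simp
  also have "\<dots> = c * (of_nat N * (- s0))"
  proof -
    have "N choose (N - 1) = N" using binomial_symmetric[of "N - 1" N] N7 by simp
    thus ?thesis using N7 by (subst coeff_linear_poly_power) auto
  qed
  also have "\<dots> = c * s0" by (simp add: ofN)
  finally show "s0 = 0" using assms(2) cu by simp
qed

lemma Ph_lc: "poly (Ph (lc s0 u p)) s = poly (Ph p) (s + s0)"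
  unfolding poly_Ph by (cases u; cases p) (simp add: algebra_simps)

lemma line_through_Q:
  assumes "l \<in> lines" "Q \<in> l" "T \<in> l" "T \<noteq> Q" "T = proj_pt p" "p \<noteq> (0, 0, 0)"
  shows "l = L p" "cross u p \<noteq> (0, 0, 0)"
proof -
  obtain n where n: "n \<noteq> (0, 0, 0)" "l = lineof n" using assms(1) lines_eq by blast
  show cp: "cross u p \<noteq> (0, 0, 0)" using proj_eq_cross[OF u0 assms(6)] assms(4,5) by metis
  have "dot n u = 0" "dot n p = 0" using line_iff u0 assms(2,3,5,6) n(2) by blast+
  thus "l = L p" unfolding L_def n(2) using two_points_line[OF cp n(1)] by blast
qed

end

lemma lines_eq_two:
  fixes a b :: "'a::field \<times> 'a \<times> 'a"
  assumes "l1 \<in> lines" "l2 \<in> lines" "proj_pt a \<in> l1" "proj_pt a \<in> l2" "proj_pt b \<in> l1" "proj_pt b \<in> l2"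
    "a \<noteq> (0, 0, 0)" "b \<noteq> (0, 0, 0)" "proj_pt a \<noteq> proj_pt b"
  shows "l1 = l2"
proof -
  obtain n1 where n1: "n1 \<noteq> (0, 0, 0)" "l1 = lineof n1" using assms(1) lines_eq by blast
  obtain n2 where n2: "n2 \<noteq> (0, 0, 0)" "l2 = lineof n2" using assms(2) lines_eq by blast
  have cp: "cross a b \<noteq> (0, 0, 0)" using proj_eq_cross assms(7-9) by blast
  have "dot n1 a = 0" "dot n1 b = 0" "dot n2 a = 0" "dot n2 b = 0"
    using line_iff assms(3-8) n1(2) n2(2) by blast+
  thus ?thesis using two_points_line[OF cp n1(1)] two_points_line[OF cp n2(1)] n1 n2 by simp
qed

lemma lineof_in_lines: "n \<noteq> (0, 0, 0) \<Longrightarrow> lineof n \<in> lines"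
  using lines_eq by blast

fun rep0 :: "'a::comm_ring_1 \<times> 'a \<times> 'a \<Rightarrow> 'a \<times> 'a \<times> 'a \<Rightarrow> 'a option \<Rightarrow> 'a \<times> 'a \<times> 'a" where
  "rep0 R1 R2 None = R1"
| "rep0 R1 R2 (Some t) = lc t R1 R2"

fun ab :: "'a::comm_ring_1 option \<Rightarrow> 'a \<times> 'a" where
  "ab None = (1, 0)"
| "ab (Some t) = (t, 1)"

locale cfg2 = cfg +
  fixes R1 R2 :: "'a \<times> 'a \<times> 'a"
  assumes c1: "cross u R1 \<noteq> (0, 0, 0)" and c2: "cross u R2 \<noteq> (0, 0, 0)"
    and s1: "\<And>s. poly (Ph R1) s = 0 \<longleftrightarrow> s \<noteq> 0"
    and s2: "\<And>s. poly (Ph R2) s = 0 \<longleftrightarrow> s \<noteq> 0"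
    and ind: "dot (cross R1 R2) u \<noteq> 0"
    and cardX: "card X = N ^ 2"
begin

abbreviation "G \<equiv> Gsub F N u R1 R2"
abbreviation "M \<equiv> lineof (cross R1 R2)"
abbreviation "rep \<equiv> rep0 R1 R2"

lemma homG: "homogeneous3 G N" by (rule Gsub_homog[OF hom])

lemma Phi_G: "Phi G N a b = Ph (vadd (sc a R1) (sc b R2))"
proof (rule poly_eqI_degree[where A = UNIV])
  fix s :: 'a
  show "poly (Phi G N a b) s = poly (Ph (vadd (sc a R1) (sc b R2))) s"
    unfolding poly_Phi[OF homG] Gsub_eval[OF hom] poly_Ph
    by (cases u; cases R1; cases R2) (simp add: algebra_simps)
  show "degree (Phi G N a b) < card (UNIV :: 'a set)" using degree_Phi[of G N a b] cardN by simp
  show "degree (Ph (vadd (sc a R1) (sc b R2))) < card (UNIV :: 'a set)"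
    using degree_Ph cardN by (simp add: le_imp_less_Suc)
qed

lemma rep_ab: "rep d = vadd (sc (fst (ab d)) R1) (sc (snd (ab d)) R2)"
  by (cases d) (cases R1; cases R2; simp)+

lemma Phi_rep: "Phi G N (fst (ab d)) (snd (ab d)) = Ph (rep d)"
  unfolding Phi_G rep_ab ..

lemma cM: "cross R1 R2 \<noteq> (0, 0, 0)" using ind by (cases u) auto

lemma R1_0: "R1 \<noteq> (0, 0, 0)" using cross_nz_right[OF c1] .

lemma rep_nz: "rep d \<noteq> (0, 0, 0)"
  by (cases d) (simp_all add: R1_0 lc_nz[OF cM])

lemma M_param: "M = range (\<lambda>d. proj_pt (rep d))"
proof -
  have "range (\<lambda>d. proj_pt (rep d)) = insert (proj_pt R1) (range (\<lambda>t. proj_pt (lc t R1 R2)))"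
    by (simp add: UNIV_option_conv image_image)
  thus ?thesis using line_param(1)[OF cM] by simp
qed

lemma rep_inj: "inj (\<lambda>d. proj_pt (rep d))"
proof (rule injI)
  have A: "proj_pt R1 \<noteq> proj_pt (lc t R1 R2)" for t using line_param(3)[OF cM] by blast
  have B: "proj_pt (lc t R1 R2) = proj_pt (lc t' R1 R2) \<Longrightarrow> t = t'" for t t'
    using line_param(2)[OF cM] unfolding inj_def by blast
  fix d1 d2 assume h: "proj_pt (rep d1) = proj_pt (rep d2)"
  show "d1 = d2"
  proof (cases d1)
    case None thus ?thesis using h A by (cases d2) auto
  next
    case (Some t1) thus ?thesis using h A B by (cases d2) (auto, metis)
  qed
qed

lemma Q_notin_M: "Q \<notin> M" using line_iff[OF u0] ind by blast

lemma rep_in_M: "proj_pt (rep d) \<in> M" using M_param by blast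

lemma rep_neq_Q: "proj_pt (rep d) \<noteq> Q" using rep_in_M Q_notin_M by metis

lemma c_rep: "cross u (rep d) \<noteq> (0, 0, 0)"
  using proj_eq_cross[OF u0 rep_nz[of d]] rep_neq_Q[of d] by metis

lemma L_lines: "cross u p \<noteq> (0, 0, 0) \<Longrightarrow> L p \<in> lines"
  unfolding L_def by (rule lineof_in_lines)

lemma Q_in_L: "Q \<in> L p"
  unfolding L_def using line_iff[OF u0] by simp

lemma p_in_L: "p \<noteq> (0, 0, 0) \<Longrightarrow> proj_pt p \<in> L p"
  unfolding L_def by (simp add: line_iff)

lemma L_inj: "inj (\<lambda>d. L (rep d))"
proof (rule injI)
  fix d1 d2 assume h: "L (rep d1) = L (rep d2)"
  show "d1 = d2"
  proof (rule ccontr)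
    assume "d1 \<noteq> d2"
    hence ne: "proj_pt (rep d1) \<noteq> proj_pt (rep d2)" using rep_inj unfolding inj_def by blast
    have "L (rep d1) = M"
    proof (rule lines_eq_two[OF L_lines[OF c_rep] lineof_in_lines[OF cM] _ rep_in_M _ rep_in_M rep_nz rep_nz ne])
      show "proj_pt (rep d1) \<in> L (rep d1)" by (rule p_in_L[OF rep_nz])
      show "proj_pt (rep d2) \<in> L (rep d1)" unfolding h by (rule p_in_L[OF rep_nz])
    qed
    thus False using Q_in_L Q_notin_M by metis
  qed
qed

lemma lines_Q: "{l \<in> lines. Q \<in> l} = range (\<lambda>d. L (rep d))"
proof (rule set_eqI, rule iffI)
  fix l assume l: "l \<in> {l \<in> lines. Q \<in> l}"
  then obtain n where n: "n \<noteq> (0, 0, 0)" "l = lineof n" using lines_eq by blast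
  have "l \<noteq> M" using l Q_notin_M by blast
  then obtain P where P: "P \<in> l" "P \<in> M" using lines_meet[OF n(1) cM] n(2) by blast
  then obtain d where d: "P = proj_pt (rep d)" using M_param by blast
  have "l = L (rep d)"
    using line_through_Q(1)[of l P "rep d"] l P d rep_neq_Q rep_nz by blast
  thus "l \<in> range (\<lambda>d. L (rep d))" by blast
next
  fix l assume "l \<in> range (\<lambda>d. L (rep d))"
  thus "l \<in> {l \<in> lines. Q \<in> l}" using L_lines[OF c_rep] Q_in_L by blast
qed

lemma X_union: "X = (\<Union>d. L (rep d) \<inter> X)"
proof (rule set_eqI, rule iffI)
  fix T assume T: "T \<in> X"
  then obtain w where w: "w \<noteq> (0, 0, 0)" "T = proj_pt w" using P2_E curve_pts_def by blast
  have "T \<noteq> Q" using T Q_notin by blast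
  hence cw: "cross u w \<noteq> (0, 0, 0)" using proj_eq_cross[OF u0 w(1)] w(2) by metis
  have "L w \<in> {l \<in> lines. Q \<in> l}" using L_lines[OF cw] Q_in_L by blast
  then obtain d where "L w = L (rep d)" using lines_Q by blast
  moreover have "T \<in> L w" using p_in_L[OF w(1)] w(2) by simp
  ultimately show "T \<in> (\<Union>d. L (rep d) \<inter> X)" using T by blast
qed blast

lemma X_disj:
  assumes "d1 \<noteq> d2" shows "(L (rep d1) \<inter> X) \<inter> (L (rep d2) \<inter> X) = {}"
proof (rule ccontr)
  assume "(L (rep d1) \<inter> X) \<inter> (L (rep d2) \<inter> X) \<noteq> {}"
  then obtain T where T: "T \<in> L (rep d1)" "T \<in> L (rep d2)" "T \<in> X" by blast
  then obtain w where w: "w \<noteq> (0, 0, 0)" "T = proj_pt w" using P2_E curve_pts_def by blast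
  have "T \<noteq> Q" using T Q_notin by blast
  have "L (rep d1) = L (rep d2)"
  proof (rule lines_eq_two[OF L_lines[OF c_rep] L_lines[OF c_rep] Q_in_L Q_in_L _ _ u0 w(1)])
    show "proj_pt w \<in> L (rep d1)" "proj_pt w \<in> L (rep d2)" using T w by simp_all
    show "Q \<noteq> proj_pt w" using \<open>T \<noteq> Q\<close> w by simp
  qed
  thus False using L_inj assms unfolding inj_def by blast
qed

lemma sum_nr: "(\<Sum>d\<in>UNIV. nr (rep d)) = N ^ 2"
proof -
  have "card X = card (\<Union>d. L (rep d) \<inter> X)" using X_union by simp
  also have "\<dots> = (\<Sum>d\<in>UNIV. card (L (rep d) \<inter> X))"
    by (rule card_UN_disjoint) (simp, simp, use X_disj in blast)
  also have "\<dots> = (\<Sum>d\<in>UNIV. nr (rep d))" using LX(2)[OF c_rep] by simp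
  finally show ?thesis using cardX by simp
qed

lemma psi_eq: "psi F N Q = card {d. nr (rep d) = N}"
proof -
  have "{l \<in> lines. Q \<in> l \<and> card (l \<inter> X) = N} = (\<lambda>d. L (rep d)) ` {d. nr (rep d) = N}"
  proof -
    have "{l \<in> lines. Q \<in> l \<and> card (l \<inter> X) = N} = {l \<in> {l \<in> lines. Q \<in> l}. card (l \<inter> X) = N}" by blast
    also have "\<dots> = {l \<in> range (\<lambda>d. L (rep d)). card (l \<inter> X) = N}" unfolding lines_Q ..
    also have "\<dots> = (\<lambda>d. L (rep d)) ` {d. nr (rep d) = N}"
      by (auto simp: LX(2)[OF c_rep])
    finally show ?thesis .
  qed
  thus ?thesis unfolding psi_def using card_image[OF inj_on_subset[OF L_inj]] by simp
qed

end

context cfg2 begin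

lemma coeff_std: "coeff (monom c N - [:c:]) m = (if m = N then c else if m = 0 then - c else 0)"
  using N7 by (cases m) auto

lemma coeff_const_pos[simp]: "0 < m \<Longrightarrow> coeff [:a:] m = 0"
  by (cases m) auto

lemma R1_rep: "vadd (sc 1 R1) (sc 0 R2) = R1" by (cases R1; cases R2) simp
lemma R2_rep: "vadd (sc 0 R1) (sc 1 R2) = R2" by (cases R1; cases R2) simp

lemma Bc_eq: "m \<le> N \<Longrightarrow> Bc G N m a b = coeff (Ph (vadd (sc a R1) (sc b R2))) m"
  using coeff_Phi[of G N a b m] unfolding Phi_G by simp

lemma std1: "Ph R1 = monom c N - [:c:]" by (rule Ph_std[OF s1])
lemma std2: "Ph R2 = monom c N - [:c:]" by (rule Ph_std[OF s2])

lemma B1: "U G N (N - 1) = 0"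
proof -
  have d: "degree (U G N (N - 1)) \<le> 1" using degree_U[OF homG, of "N - 1"] N7 by simp
  have c1': "coeff (U G N (N - 1)) 1 = 0"
  proof -
    have "coeff (U G N (N - 1)) 1 = Bc G N (N - 1) 1 0" using Bc_10[OF homG, of "N - 1"] N7 by simp
    also have "\<dots> = coeff (Ph R1) (N - 1)" using Bc_eq[of "N - 1" 1 0] R1_rep by simp
    also have "\<dots> = 0" unfolding std1 coeff_std using N7 by simp
    finally show ?thesis .
  qed
  have c0: "coeff (U G N (N - 1)) 0 = 0"
  proof -
    have "coeff (U G N (N - 1)) 0 = Bc G N (N - 1) 0 1" using Bc_01[OF homG, of "N - 1"] N7 by simp
    also have "\<dots> = coeff (Ph R2) (N - 1)" using Bc_eq[of "N - 1" 0 1] R2_rep by simp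
    also have "\<dots> = 0" unfolding std2 coeff_std using N7 by simp
    finally show ?thesis .
  qed
  show ?thesis
  proof (rule poly_eqI)
    fix j show "coeff (U G N (N - 1)) j = coeff 0 j"
      using c0 c1' d coeff_eq_0[of "U G N (N - 1)" j] by (cases j; cases "j - 1") auto
  qed
qed

lemma coeff_Ph_rep: "m \<le> N \<Longrightarrow> coeff (Ph (rep d)) m = Bc G N m (fst (ab d)) (snd (ab d))"
  using Bc_eq rep_ab by simp

lemma top1: "coeff (Ph (rep d)) (N - 1) = 0"
  using coeff_Ph_rep[of "N - 1" d] U_zero[OF homG B1] by simp

lemma full_std:
  assumes "nr (rep d) = N"
  shows "\<And>s. poly (Ph (rep d)) s = 0 \<longleftrightarrow> s \<noteq> 0" and "Ph (rep d) = monom c N - [:c:]"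
proof -
  obtain s0 where s0: "\<And>s. poly (Ph (rep d)) s = 0 \<longleftrightarrow> s \<noteq> s0" using full_s0[OF assms] by blast
  have "s0 = 0" using Ph_shift_zero[OF s0 top1] .
  thus h: "\<And>s. poly (Ph (rep d)) s = 0 \<longleftrightarrow> s \<noteq> 0" using s0 by simp
  show "Ph (rep d) = monom c N - [:c:]" by (rule Ph_std[OF h])
qed

lemma Bc_full:
  assumes "nr (rep d) = N" "0 < m" "m < N"
  shows "Bc G N m (fst (ab d)) (snd (ab d)) = 0"
  using coeff_Ph_rep[of m d] full_std(2)[OF assms(1)] assms(2,3) by (simp add: coeff_std)

definition "FS = {d. nr (rep d) = N}"
definition "r = card FS"

lemma card_opt: "card (UNIV :: 'a option set) = N + 2" using cardN by simp

lemma None_full: "None \<in> FS"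
proof -
  have "{s. poly (Ph R1) s = 0} = UNIV - {0}" using s1 by auto
  hence "nr R1 = N" unfolding nr_def using cardN by (simp add: card_Diff_subset)
  thus ?thesis unfolding FS_def by simp
qed

lemma r_pos: "r \<ge> 1"
proof -
  have "FS \<noteq> {}" using None_full by blast
  thus ?thesis unfolding r_def by (simp add: Suc_le_eq card_gt_0_iff)
qed

lemma r_le: "r \<le> N"
proof -
  have "r * N = (\<Sum>d\<in>FS. nr (rep d))" unfolding r_def FS_def by simp
  also have "\<dots> \<le> (\<Sum>d\<in>UNIV. nr (rep d))" by (rule sum_mono2) auto
  also have "\<dots> = N * N" using sum_nr by (simp add: power2_eq_square)
  finally show ?thesis using N7 by simp
qed

lemma T_card: "card {t. nr (rep (Some t)) = N} = r - 1"
proof -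
  have "FS = insert None (Some ` {t. nr (rep (Some t)) = N})"
  proof (rule set_eqI)
    fix d show "d \<in> FS \<longleftrightarrow> d \<in> insert None (Some ` {t. nr (rep (Some t)) = N})"
      using None_full by (cases d) (auto simp: FS_def)
  qed
  hence "r = Suc (card {t. nr (rep (Some t)) = N})"
    unfolding r_def by (simp add: card_image)
  thus ?thesis by simp
qed

lemma kill:
  assumes "N - r < m" "m < N"
  shows "U G N m = 0"
proof (rule ccontr)
  assume nz: "U G N m \<noteq> 0"
  have dle: "degree (U G N m) \<le> N - m" by (rule degree_U[OF homG])
  have top0: "coeff (U G N m) (N - m) = 0"
  proof -
    have "Bc G N m (fst (ab None)) (snd (ab None)) = 0"
      by (rule Bc_full) (use None_full assms in \<open>auto simp: FS_def\<close>)
    thus ?thesis using Bc_10[OF homG, of m] assms by simp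
  qed
  have dlt: "degree (U G N m) < N - m"
  proof (rule ccontr)
    assume "\<not> degree (U G N m) < N - m"
    hence "degree (U G N m) = N - m" using dle by simp
    hence "lead_coeff (U G N m) = 0" using top0 by simp
    thus False using nz by simp
  qed
  have sub: "{t. nr (rep (Some t)) = N} \<subseteq> {t. poly (U G N m) t = 0}"
  proof
    fix t assume t: "t \<in> {t. nr (rep (Some t)) = N}"
    have "Bc G N m (fst (ab (Some t))) (snd (ab (Some t))) = 0"
      by (rule Bc_full) (use t assms in auto)
    thus "t \<in> {t. poly (U G N m) t = 0}" using poly_U[OF homG] by simp
  qed
  have "r - 1 \<le> card {t. poly (U G N m) t = 0}"
    using card_mono[OF _ sub] T_card by simp
  also have "\<dots> \<le> degree (U G N m)" by (rule card_poly_roots_bound[OF nz])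
  finally show False using dlt assms r_pos by linarith
qed

lemma Bc_kill: "N - r < m \<Longrightarrow> m < N \<Longrightarrow> Bc G N m a b = 0"
  using U_zero[OF homG kill] by blast

lemma nonfull_bound:
  assumes "nr (rep d) \<noteq> N"
  shows "nr (rep d) \<le> N + 1 - r"
proof -
  obtain a b where ab: "ab d = (a, b)" by (cases "ab d") auto
  define S' where "S' = (\<Sum>m\<le>N - r. monom (Bc G N m a b) m)"
  define S where "S = [:c:] + S'"
  have decomp: "Ph (rep d) = monom c N + S'"
  proof (rule poly_eqI)
    fix m
    have cS': "coeff S' m = (if m \<le> N - r then Bc G N m a b else 0)"
      unfolding S'_def by (simp add: coeff_sum)
    show "coeff (Ph (rep d)) m = coeff (monom c N + S') m"
    proof (cases "m \<le> N")
      case True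
      hence e: "coeff (Ph (rep d)) m = Bc G N m a b" using coeff_Ph_rep ab by simp
      show ?thesis
      proof (cases "m = N")
        case True
        thus ?thesis using coeff_Ph_top[of "rep d"] r_pos cS' N7 by auto
      next
        case False
        thus ?thesis using e cS' Bc_kill[of m a b] \<open>m \<le> N\<close> by auto
      qed
    next
      case False
      thus ?thesis using coeff_eq_0[OF le_less_trans[OF degree_Ph False[unfolded not_le]]] cS' by auto
    qed
  qed
  have pv: "poly (Ph (rep d)) s = poly S s" if "s \<noteq> 0" for s
    unfolding decomp S_def using N_pow[OF that] by (simp add: poly_monom)
  have Snz: "S \<noteq> 0"
  proof
    assume "S = 0"
    hence "UNIV - {0} \<subseteq> {s. poly (Ph (rep d)) s = 0}" using pv by auto
    hence "card (UNIV - {0::'a}) \<le> nr (rep d)" unfolding nr_def by (rule card_mono[rotated]) simp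
    hence "N \<le> nr (rep d)" using cardN by (simp add: card_Diff_subset)
    thus False using nr_le assms by (meson le_antisym)
  qed
  have dS': "degree S' \<le> N - r"
    unfolding S'_def by (rule degree_sum_le) (simp, rule order.trans[OF degree_monom_le], simp)
  have dS: "degree S \<le> N - r"
    unfolding S_def by (rule degree_add_le) (simp_all add: dS')
  have "{s. poly (Ph (rep d)) s = 0} \<subseteq> insert 0 {s. poly S s = 0}" using pv by auto
  hence "nr (rep d) \<le> card (insert 0 {s. poly S s = 0})" unfolding nr_def by (rule card_mono[rotated]) simp
  also have "\<dots> \<le> Suc (card {s. poly S s = 0})" by (simp add: card_insert_if)
  also have "\<dots> \<le> Suc (degree S)" using card_poly_roots_bound[OF Snz] by simp
  finally show ?thesis using dS r_le by linarith
qed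

lemma r_eq:
  assumes "r \<ge> 4" shows "r = N"
proof (rule ccontr)
  assume "r \<noteq> N"
  hence rl: "r < N" using r_le by simp
  have "N * N = (\<Sum>d\<in>UNIV. nr (rep d))" using sum_nr by (simp add: power2_eq_square)
  also have "\<dots> = (\<Sum>d\<in>FS. nr (rep d)) + (\<Sum>d\<in>UNIV - FS. nr (rep d))"
    by (simp add: sum.subset_diff[of FS UNIV])
  also have "(\<Sum>d\<in>FS. nr (rep d)) = r * N" unfolding r_def FS_def by simp
  also have "(\<Sum>d\<in>UNIV - FS. nr (rep d)) \<le> (\<Sum>d\<in>UNIV - FS. N + 1 - r)"
    by (rule sum_mono) (use nonfull_bound in \<open>auto simp: FS_def\<close>)
  also have "\<dots> = card (UNIV - FS) * (N + 1 - r)" by simp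
  also have "card (UNIV - FS) = N + 2 - r" using card_opt unfolding r_def by (simp add: card_Diff_subset)
  finally have ineq: "N * N \<le> r * N + (N + 2 - r) * (N + 1 - r)" by simp
  have e1: "int (N + 2 - r) = int N + 2 - int r" using rl by simp
  have e2: "int (N + 1 - r) = int N + 1 - int r" using rl by simp
  have "int (N * N) \<le> int (r * N + (N + 2 - r) * (N + 1 - r))" using ineq by (simp only: of_nat_le_iff)
  hence "int N * int N \<le> int r * int N + int (N + 2 - r) * int (N + 1 - r)"
    by (simp only: of_nat_mult of_nat_add)
  hence "int N * int N \<le> int r * int N + (int N + 2 - int r) * (int N + 1 - int r)"
    unfolding e1 e2 .
  moreover have "(int N - int r - 1) * (int r - 4) \<ge> 0"
    using rl assms by (intro mult_nonneg_nonneg) simp_all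
  ultimately show False using N7 by (simp add: algebra_simps)
qed

end

context cfg2 begin

lemma lc0: "lc 0 u p = p" by (cases u; cases p) simp

lemma ev_rep_nz:
  assumes "d \<in> FS \<or> nr (rep d) = 0"
  shows "ev F (rep d) \<noteq> 0"
proof -
  have "poly (Ph (rep d)) 0 \<noteq> 0"
  proof (cases "d \<in> FS")
    case True thus ?thesis using full_std(1)[of d 0] by (simp add: FS_def)
  next
    case False
    hence "card {s. poly (Ph (rep d)) s = 0} = 0" using assms unfolding nr_def by simp
    hence "{s. poly (Ph (rep d)) s = 0} = {}" by simp
    thus ?thesis by blast
  qed
  thus ?thesis unfolding poly_Ph lc0 .
qed

lemma a0_main:
  assumes r4: "r \<ge> 4"
  shows "a0 F = 3"
proof -
  have rN: "r = N" using r_eq[OF r4] .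
  have "card (UNIV - FS) = 2" using card_opt rN unfolding r_def by (simp add: card_Diff_subset)
  then obtain d1 d2 where d12: "UNIV - FS = {d1, d2}" "d1 \<noteq> d2" by (auto simp: card_2_iff)
  have "N * N = (\<Sum>d\<in>UNIV. nr (rep d))" using sum_nr by (simp add: power2_eq_square)
  also have "\<dots> = (\<Sum>d\<in>FS. nr (rep d)) + (\<Sum>d\<in>UNIV - FS. nr (rep d))"
    by (simp add: sum.subset_diff[of FS UNIV])
  also have "(\<Sum>d\<in>FS. nr (rep d)) = N * N" using rN unfolding r_def FS_def by simp
  also have "(\<Sum>d\<in>UNIV - FS. nr (rep d)) = nr (rep d1) + nr (rep d2)" using d12 by simp
  finally have z: "nr (rep d1) = 0" "nr (rep d2) = 0" by simp_all
  have all_nz: "ev F (rep d) \<noteq> 0" for d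
  proof (cases "d \<in> FS")
    case True thus ?thesis using ev_rep_nz by blast
  next
    case False hence "d = d1 \<or> d = d2" using d12 by blast
    thus ?thesis using ev_rep_nz z by blast
  qed
  have empty_L: "L (rep d) \<inter> X = {}" if "nr (rep d) = 0" for d
    using LX(2)[OF c_rep, of d] that by simp
  have M_free: "M \<inter> X = {}"
    unfolding M_param using all_nz curve_iff[OF hom rep_nz] by blast
  have full_pt: "proj_pt (rep e) \<in> l"
    if e: "e \<in> FS" and l: "l \<in> lines" "l \<inter> X = {}" "Q \<notin> l" for e l
  proof -
    obtain n where n: "n \<noteq> (0, 0, 0)" "l = lineof n" using l(1) lines_eq by blast
    have "l \<noteq> L (rep e)" using Q_in_L l(3) by blast
    then obtain T where T: "T \<in> l" "T \<in> L (rep e)"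
      using lines_meet[OF n(1) c_rep[of e]] n(2) unfolding L_def by blast
    have "T \<noteq> Q" using T l(3) by blast
    then obtain s where s: "T = proj_pt (lc s u (rep e))"
      using T(2) unfolding L_def line_param(1)[OF c_rep] by blast
    have "T \<notin> X" using T l(2) by blast
    hence "ev F (lc s u (rep e)) \<noteq> 0" using curve_iff[OF hom lc_nz[OF c_rep]] s by blast
    hence "poly (Ph (rep e)) s \<noteq> 0" unfolding poly_Ph .
    hence "s = 0" using full_std(1)[of e s] e by (simp add: FS_def)
    thus ?thesis using T(1) s lc0 by simp
  qed
  have A0: "{l \<in> lines. l \<inter> X = {}} = {M, L (rep d1), L (rep d2)}"
  proof (rule set_eqI, rule iffI)
    fix l assume l: "l \<in> {l \<in> lines. l \<inter> X = {}}"
    show "l \<in> {M, L (rep d1), L (rep d2)}"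
    proof (cases "Q \<in> l")
      case True
      then obtain d where d: "l = L (rep d)" using lines_Q l by blast
      have "d \<notin> FS"
      proof
        assume "d \<in> FS"
        hence "card (l \<inter> X) = N" using LX(2)[OF c_rep] d by (simp add: FS_def)
        thus False using l N7 by simp
      qed
      hence "d = d1 \<or> d = d2" using d12 by blast
      thus ?thesis using d by blast
    next
      case False
      have "card (FS - {None}) \<ge> 1" using rN N7 None_full unfolding r_def by (simp add: card_Diff_singleton)
      hence "FS - {None} \<noteq> {}" by (metis card.empty not_one_le_zero)
      then obtain e2 where "e2 \<in> FS - {None}" by blast
      hence e: "None \<in> FS" "e2 \<in> FS" "None \<noteq> e2" using None_full by auto
      define e1 :: "'a option" where "e1 = None"
      note e = e[folded e1_def]
      have ne: "proj_pt (rep e1) \<noteq> proj_pt (rep e2)" using rep_inj e(3) unfolding inj_def by blast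
      have "l = M"
        by (rule lines_eq_two[OF _ lineof_in_lines[OF cM] full_pt[OF e(1)] rep_in_M full_pt[OF e(2)]
              rep_in_M rep_nz rep_nz ne]) (use l False in auto)
      thus ?thesis by blast
    qed
  next
    fix l assume "l \<in> {M, L (rep d1), L (rep d2)}"
    thus "l \<in> {l \<in> lines. l \<inter> X = {}}"
      using M_free lineof_in_lines[OF cM] L_lines[OF c_rep] empty_L z by blast
  qed
  have n1: "M \<noteq> L (rep d1)" "M \<noteq> L (rep d2)" using Q_in_L Q_notin_M by metis+
  have n2: "L (rep d1) \<noteq> L (rep d2)" using L_inj d12(2) unfolding inj_def by blast
  show ?thesis unfolding a0_def A0 using n1 n2 by simp
qed

end

lemma triple_cyc: "dot (cross u R1) R2 = dot (cross R1 R2) u"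
  by (cases u; cases R1; cases R2) (simp add: algebra_simps)

context cfg begin

lemma exists_R:
  assumes "l \<in> lines" "Q \<in> l" "card (l \<inter> X) = N"
  shows "\<exists>R. cross u R \<noteq> (0, 0, 0) \<and> L R = l \<and> (\<forall>s. poly (Ph R) s = 0 \<longleftrightarrow> s \<noteq> 0)"
proof -
  have "l \<inter> X \<noteq> {}" using assms(3) N7 by auto
  then obtain T where T: "T \<in> l" "T \<in> X" by blast
  then obtain p where p: "p \<noteq> (0, 0, 0)" "T = proj_pt p" using P2_E curve_pts_def by blast
  have "T \<noteq> Q" using T Q_notin by blast
  note lt = line_through_Q[OF assms(1,2) T(1) this p(2,1)]
  have "nr p = N" using LX(2)[OF lt(2)] assms(3) lt(1) by simp
  then obtain s0 where s0: "\<And>s. poly (Ph p) s = 0 \<longleftrightarrow> s \<noteq> s0" using full_s0 by blast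
  define R where "R = lc s0 u p"
  have "cross u R = cross u p" unfolding R_def by (rule cross_lc)
  moreover have "poly (Ph R) s = 0 \<longleftrightarrow> s \<noteq> 0" for s
    unfolding R_def Ph_lc s0 by simp
  ultimately show ?thesis using lt unfolding L_def by metis
qed

lemma main:
  assumes cardX: "card X = N ^ 2" and r4: "psi F N Q \<ge> 4"
  shows "psi F N Q = N \<and> a0 F = 3"
proof -
  let ?FL = "{l \<in> lines. Q \<in> l \<and> card (l \<inter> X) = N}"
  have cFL: "card ?FL \<ge> 4" using r4 unfolding psi_def .
  have "?FL \<noteq> {}"
  proof
    assume "?FL = {}" hence "card ?FL = 0" by (simp only: card.empty)
    thus False using cFL by linarith
  qed
  then obtain l1 where l1: "l1 \<in> ?FL" by blast
  have "card (?FL - {l1}) \<ge> 3" using cFL l1 by (simp add: card_Diff_singleton)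
  have "?FL - {l1} \<noteq> {}"
  proof
    assume "?FL - {l1} = {}" hence "card (?FL - {l1}) = 0" by (simp only: card.empty)
    thus False using \<open>card (?FL - {l1}) \<ge> 3\<close> by linarith
  qed
  then obtain l2 where l2: "l2 \<in> ?FL" "l2 \<noteq> l1" by blast
  obtain R1 where R1: "cross u R1 \<noteq> (0, 0, 0)" "L R1 = l1" "\<forall>s. poly (Ph R1) s = 0 \<longleftrightarrow> s \<noteq> 0"
    using exists_R l1 by blast
  obtain R2 where R2: "cross u R2 \<noteq> (0, 0, 0)" "L R2 = l2" "\<forall>s. poly (Ph R2) s = 0 \<longleftrightarrow> s \<noteq> 0"
    using exists_R l2 by blast
  have ind: "dot (cross R1 R2) u \<noteq> 0"
  proof
    assume h: "dot (cross R1 R2) u = 0"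
    have R20: "R2 \<noteq> (0, 0, 0)" using cross_nz_right[OF R2(1)] .
    have "proj_pt R2 \<in> l1" using h triple_cyc[of u R1 R2] line_iff[OF R20] R1(2) unfolding L_def by metis
    moreover have "proj_pt R2 \<in> l2" using R2(2) line_iff[OF R20, of "cross u R2"] unfolding L_def by simp
    moreover have "proj_pt R2 \<noteq> Q" using proj_eq_cross[OF R20 u0] R2(1) cross_sc_left
      by (metis proj_eq_cross u0 R20 cross_self)
    ultimately have "l1 = l2"
      using lines_eq_two[of l1 l2 u R2] l1 l2(1) u0 R20 by blast
    thus False using l2(2) by simp
  qed
  interpret c2: cfg2 F N u R1 R2
    by unfold_locales (use R1 R2 ind cardX in auto)
  have "psi F N Q = c2.r" unfolding c2.psi_eq c2.r_def c2.FS_def ..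
  hence "c2.r \<ge> 4" using r4 by simp
  thus ?thesis using c2.r_eq c2.a0_main \<open>psi F N Q = c2.r\<close> by simp
qed

end

theorem corollary3p11:
  fixes F :: "'a::{finite, field} poly poly poly" and q :: nat
  assumes "CARD('a) = q"
    and "q \<ge> 8"
    and "F \<noteq> 0"
    and "homogeneous3 F (q - 1)"
    and "no_linear_components F"
    and "card (curve_pts F) = (q - 1)^2"
    and "Q \<in> Zset F"
    and "psi F (q - 1) Q \<ge> 4"
  shows "psi F (q - 1) Q = q - 1 \<and> a0 F = 3"
proof -
  define N where "N = q - 1"
  have cardN: "CARD('a) = N + 1" using assms(1,2) N_def by simp
  have N7: "N \<ge> 7" using assms(2) N_def by simp
  have hom: "homogeneous3 F N" using assms(4) N_def by simp
  from assms(7) have QP: "Q \<in> P2" and QX: "Q \<notin> curve_pts F" by (auto simp: Zset_def)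
  then obtain u where u: "u \<noteq> (0, 0, 0)" "Q = proj_pt u" using P2_E by blast
  have cu: "ev F u \<noteq> 0" using curve_iff[OF hom u(1)] u(2) QX by simp
  interpret cfg F N u using hom cardN N7 u(1) cu by unfold_locales
  have "psi F N Q = N \<and> a0 F = 3" using main assms(6,8) N_def u(2) by simp
  thus ?thesis using N_def by simp
qed

end
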